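(* Let $n\ge 2$ and let $Q_n$ be the graph defined below. For all $i\neq j$ in $\{1,\dots,n\}$, the graph $\sigma^{ij}_{\bowtie}(Q_n)$ is not a trapezoid graph.
   Context: $Q_n$ has $5n$ nodes $v_1,\dots,v_{5n}$, the edges $\{v_t,v_{t+1}\}$ for $1\le t<5n$ (a path), and additionally the edges $\{v_{5i-3},v_{5i-1}\}$ for each $i\in\{1,\dots,n\}$. For $i\in\{1,\dots,n\}$, $H_i$ is the subgraph with vertices $v_{5i-2},v_{5i-1}$ and the edge between them, and $\sigma_i: V(H_1)\to V(H_i)$ is the isomorphism $\sigma_i(v_3)=v_{5i-2}$, $\sigma_i(v_4)=v_{5i-1}$; $\sigma^{ij}=\sigma_i\circ\sigma_j^{-1}$. Crossing: given a graph $G$ and two independent isomorphic subgraphs $H=(V_1,E_1)$, $H'=(V_2,E_2)$ (disjoint vertex sets, no edges of $G$ between them) with isomorphism $\sigma:V_1\to V_2$, the crossing $\sigma_{\bowtie}(G)$ is obtained from $G$ by replacing every pair of edges $\{u,v\}\in E_1$, $\{\sigma(u),\sigma(v)\}\in E_2$ by the pair $\{u,\sigma(v)\}$, $\{\sigma(u),v\}$. Concretely, $\sigma^{ij}_{\bowtie}(Q_n)$ is obtained from $Q_n$ by removing the edges $\{v_{5i-2},v_{5i-1}\}$ and $\{v_{5j-2},v_{5j-1}\}$ and adding the edges $\{v_{5i-2},v_{5j-1}\}$ and $\{v_{5j-2},v_{5i-1}\}$. A trapezoid graph is the intersection graph of a family of trapezoids each having one side on a fixed top horizontal line and one side on a fixed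 parallel bottom line. *)

theory Defs
  imports "HOL-Analysis.Analysis"
begin

text \<open>Graphs are given by a vertex set V and a set E of 2-element vertex sets (edges).\<close>

definition is_trapezoid :: "(real \<times> real) set \<Rightarrow> bool" where
  "is_trapezoid S \<longleftrightarrow> (\<exists>a b c d. a \<le> b \<and> c \<le> d \<and>
      S = convex hull {(a, 1), (b, 1), (c, 0), (d, 0)})"

definition is_trapezoid_graph :: "'a set \<Rightarrow> 'a set set \<Rightarrow> bool" where
  "is_trapezoid_graph V E \<longleftrightarrow> (\<exists>T :: 'a \<Rightarrow> (real \<times> real) set.
      (\<forall>v\<in>V. is_trapezoid (T v)) \<and>
      (\<forall>u\<in>V. \<forall>v\<in>V. u \<noteq> v \<longrightarrow> ({u, v} \<in> E \<longleftrightarrow> T u \<inter> T v \<noteq> {})))"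

text \<open>The graph Q_n, vertex v_t represented by the natural number t.\<close>
definition Q_vertices :: "nat \<Rightarrow> nat set" where
  "Q_vertices n = {1..5*n}"

definition Q_edges :: "nat \<Rightarrow> nat set set" where
  "Q_edges n = {{t, t + 1} | t. 1 \<le> t \<and> t < 5*n}
             \<union> {{5*i - 3, 5*i - 1} | i. 1 \<le> i \<and> i \<le> n}"

definition H_edges :: "nat \<Rightarrow> nat set set" where
  "H_edges i = {{5*i - 2, 5*i - 1}}"

text \<open>sigma^{ij} = sigma_i o sigma_j^{-1} : V(H_j) -> V(H_i) (identity elsewhere, irrelevant).\<close>
definition sigma :: "nat \<Rightarrow> nat \<Rightarrow> nat \<Rightarrow> nat" where
  "sigma i j x = (if x = 5*j - 2 then 5*i - 2 else if x = 5*j - 1 then 5*i - 1 else x)"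

text \<open>Crossing of E along subgraph with edge set E1 and isomorphism s onto its copy:
every pair of edges {u,v} in E1, {s u, s v} replaced by {u, s v}, {s u, v}.\<close>
definition crossing :: "'a set set \<Rightarrow> 'a set set \<Rightarrow> ('a \<Rightarrow> 'a) \<Rightarrow> 'a set set" where
  "crossing E E1 s =
     (E - (E1 \<union> (\<lambda>e. s ` e) ` E1)) \<union> {{u, s v} | u v. {u, v} \<in> E1 \<and> u \<noteq> v}"

end

theory Submission
  imports Defs
begin


lemma sig1: "1 \<le> j \<Longrightarrow> sigma i j (5*j-2) = 5*i-2" by (simp add: sigma_def)
lemma sig2: "1 \<le> j \<Longrightarrow> sigma i j (5*j-1) = 5*i-1" by (simp add: sigma_def)

lemma added:
  assumes "1 \<le> j"
  shows "{{u, sigma i j v} | u v. {u,v} \<in> H_edges j \<and> u \<noteq> v} = {{5*j-2,5*i-1},{5*j-1,5*i-2}}"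
proof -
  have "{u,v} \<in> H_edges j \<and> u \<noteq> v \<longleftrightarrow> (u = 5*j-2 \<and> v = 5*j-1) \<or> (u = 5*j-1 \<and> v = 5*j-2)" for u v
    using assms by (auto simp: H_edges_def doubleton_eq_iff)
  then have "{{u, sigma i j v} | u v. {u,v} \<in> H_edges j \<and> u \<noteq> v} =
     {{u, sigma i j v} | u v. (u = 5*j-2 \<and> v = 5*j-1) \<or> (u = 5*j-1 \<and> v = 5*j-2)}"
    by presburger
  also have "\<dots> = {{5*j-2, sigma i j (5*j-1)},{5*j-1, sigma i j (5*j-2)}}"
    by blast
  finally show ?thesis using sig1[OF assms, of i] sig2[OF assms, of i] by simp
qed

lemma cross_eq:
  assumes "1 \<le> i" "1 \<le> j"
  shows "crossing (Q_edges n) (H_edges j) (sigma i j) =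
     (Q_edges n - {{5*i-2,5*i-1},{5*j-2,5*j-1}}) \<union> {{5*j-2,5*i-1},{5*j-1,5*i-2}}"
proof -
  have h1: "(\<lambda>e. sigma i j ` e) ` H_edges j = {{5*i-2,5*i-1}}"
    by (simp only: H_edges_def image_insert image_empty sig1[OF assms(2)] sig2[OF assms(2)])
  have h2: "H_edges j \<union> (\<lambda>e. sigma i j ` e) ` H_edges j = {{5*i-2,5*i-1},{5*j-2,5*j-1}}"
    unfolding h1 by (simp add: H_edges_def)
  show ?thesis unfolding crossing_def h2 added[OF assms(2), of i] by (rule refl)
qed

lemma Q_edges_iff:
  "x \<in> Q_edges n \<longleftrightarrow> (\<exists>t. x = {t,t+1} \<and> 1\<le>t \<and> t<5*n) \<or> (\<exists>k. x = {5*k-3,5*k-1} \<and> 1\<le>k \<and> k\<le>n)"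
  unfolding Q_edges_def Un_iff mem_Collect_eq by (rule refl)

lemma Q_mem:
  "{u,v} \<in> Q_edges n \<longleftrightarrow>
    ((u = v+1 \<or> v = u+1) \<and> 1 \<le> u \<and> 1 \<le> v \<and> u \<le> 5*n \<and> v \<le> 5*n) \<or>
    (\<exists>k. 1\<le>k \<and> k\<le>n \<and> ((u=5*k-3 \<and> v=5*k-1) \<or> (v=5*k-3 \<and> u=5*k-1)))"
  unfolding Q_edges_iff doubleton_eq_iff
  apply (rule iffI)
  subgoal apply (elim disjE exE conjE)
    subgoal by simp
    subgoal by simp
    subgoal for k by (rule disjI2, rule exI[of _ k], simp)
    subgoal for k by (rule disjI2, rule exI[of _ k], simp)
    done
  subgoal apply (elim disjE exE conjE)
    subgoal by (rule disjI1, rule exI[of _ v], simp)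
    subgoal by (rule disjI1, rule exI[of _ u], simp)
    subgoal for k by (rule disjI2, rule exI[of _ k], simp)
    subgoal for k by (rule disjI2, rule exI[of _ k], simp)
    done
  done

lemma chord_iff:
  fixes u v n :: nat
  shows "(\<exists>k. 1\<le>k \<and> k\<le>n \<and> ((u=5*k-3 \<and> v=5*k-1) \<or> (v=5*k-3 \<and> u=5*k-1))) \<longleftrightarrow>
   (\<exists>k<n. (u = 5*k+2 \<and> v = 5*k+4) \<or> (v = 5*k+2 \<and> u = 5*k+4))"
proof
  assume "\<exists>k. 1\<le>k \<and> k\<le>n \<and> ((u=5*k-3 \<and> v=5*k-1) \<or> (v=5*k-3 \<and> u=5*k-1))"
  then obtain k where "1\<le>k" "k\<le>n" "(u=5*k-3 \<and> v=5*k-1) \<or> (v=5*k-3 \<and> u=5*k-1)" by blast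
  then show "\<exists>k<n. (u = 5*k+2 \<and> v = 5*k+4) \<or> (v = 5*k+2 \<and> u = 5*k+4)"
    by (intro exI[of _ "k-1"]) auto
next
  assume "\<exists>k<n. (u = 5*k+2 \<and> v = 5*k+4) \<or> (v = 5*k+2 \<and> u = 5*k+4)"
  then obtain k where "k<n" "(u = 5*k+2 \<and> v = 5*k+4) \<or> (v = 5*k+2 \<and> u = 5*k+4)" by blast
  then show "\<exists>k. 1\<le>k \<and> k\<le>n \<and> ((u=5*k-3 \<and> v=5*k-1) \<or> (v=5*k-3 \<and> u=5*k-1))"
    by (intro exI[of _ "k+1"]) auto
qed

definition adjP :: "nat \<Rightarrow> nat \<Rightarrow> nat \<Rightarrow> nat \<Rightarrow> nat \<Rightarrow> bool" where
 "adjP n i0 j0 u v \<longleftrightarrow>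
   ((((u = v+1 \<or> v = u+1) \<and> 1 \<le> u \<and> 1 \<le> v \<and> u \<le> 5*n \<and> v \<le> 5*n)
      \<or> (\<exists>k<n. (u = 5*k+2 \<and> v = 5*k+4) \<or> (v = 5*k+2 \<and> u = 5*k+4)))
    \<and> \<not>((u = 5*i0+3 \<and> v = 5*i0+4) \<or> (v = 5*i0+3 \<and> u = 5*i0+4))
    \<and> \<not>((u = 5*j0+3 \<and> v = 5*j0+4) \<or> (v = 5*j0+3 \<and> u = 5*j0+4)))
   \<or> (u = 5*j0+3 \<and> v = 5*i0+4) \<or> (v = 5*j0+3 \<and> u = 5*i0+4)
   \<or> (u = 5*j0+4 \<and> v = 5*i0+3) \<or> (v = 5*j0+4 \<and> u = 5*i0+3)"

lemma adj_iff:
  assumes "1 \<le> i" "1 \<le> j"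
  shows "{u,v} \<in> crossing (Q_edges n) (H_edges j) (sigma i j) \<longleftrightarrow> adjP n (i-1) (j-1) u v"
proof -
  have e1: "5*i-2 = 5*(i-1)+3" "5*i-1 = 5*(i-1)+4" "5*j-2 = 5*(j-1)+3" "5*j-1 = 5*(j-1)+4"
    using assms by auto
  show ?thesis
    unfolding cross_eq[OF assms] Un_iff Diff_iff Q_mem chord_iff adjP_def e1 insert_iff empty_iff
      doubleton_eq_iff
    by blast
qed



abbreviation hull4 :: "real \<Rightarrow> real \<Rightarrow> real \<Rightarrow> real \<Rightarrow> (real \<times> real) set" where
  "hull4 a b c d \<equiv> convex hull {(a, 1), (b, 1), (c, 0), (d, 0)}"

lemma hull4_sub:
  assumes "convex H" "(a,1) \<in> H" "(b,1) \<in> H" "(c,0) \<in> H" "(d,0) \<in> H"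
  shows "hull4 a b c d \<subseteq> H"
  using assms by (intro hull_minimal) auto

lemma trap_left_disj:
  fixes a1 b1 c1 d1 a2 b2 c2 d2 :: real
  assumes "a1 \<le> b1" "c1 \<le> d1" "a2 \<le> b2" "c2 \<le> d2" "b1 < a2" "d1 < c2"
  shows "hull4 a1 b1 c1 d1 \<inter> hull4 a2 b2 c2 d2 = {}"
proof -
  let ?w = "(1::real, d1 - b1)"
  have "hull4 a1 b1 c1 d1 \<subseteq> {p. inner ?w p \<le> d1}"
    using assms by (intro hull4_sub convex_halfspace_le) (auto simp: inner_prod_def)
  moreover have "hull4 a2 b2 c2 d2 \<subseteq> {p. inner ?w p > d1}"
    using assms by (intro hull4_sub convex_halfspace_gt) (auto simp: inner_prod_def)
  ultimately show ?thesis by fastforce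
qed

lemma mem_hull2:
  fixes S :: "(real \<times> real) set"
  assumes "x \<in> S" "y \<in> S" "0 \<le> u" "u \<le> 1"
  shows "(1 - u) *\<^sub>R x + u *\<^sub>R y \<in> convex hull S"
  using assms by (intro convexD[OF convex_convex_hull]) (auto intro: hull_inc)

lemma mem_hull_line:
  fixes S :: "(real \<times> real) set"
  assumes "(a,y) \<in> S" "(b,y) \<in> S" "a \<le> x" "x \<le> b"
  shows "(x, y) \<in> convex hull S"
proof (cases "a = b")
  case True
  then have "x = a" using assms by auto
  then show ?thesis using assms(1) by (auto intro: hull_inc)
next
  case False
  define u where "u = (x - a) / (b - a)"
  have u: "0 \<le> u" "u \<le> 1" using assms False by (auto simp: u_def field_simps)
  have ub: "u * (b - a) = x - a" using False by (simp add: u_def)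
  have x: "(1 - u) * a + u * b = x"
  proof -
    have "(1 - u) * a + u * b = a + u * (b - a)" by (simp add: algebra_simps)
    then show ?thesis using ub by simp
  qed
  have yy: "(1 - u) * y + u * y = y" by (simp add: algebra_simps)
  have "(1 - u) *\<^sub>R (a,y) + u *\<^sub>R (b,y) = (x, y)"
    using x yy by simp
  then show ?thesis using mem_hull2[OF assms(1,2) u] by simp
qed

lemma trap_cross:
  fixes a b c d e f g h :: real
  assumes "b < e" "h < c"
  shows "hull4 a b c d \<inter> hull4 e f g h \<noteq> {}"
proof -
  define y where "y = (c - h) / ((c - h) + (e - b))"
  have y: "0 \<le> y" "y \<le> 1" using assms by (auto simp: y_def field_simps)
  have e1: "(1 - y) *\<^sub>R (c, 0) + y *\<^sub>R (b, 1) = ((1-y)*c + y*b, y)" by simp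
  have e2: "(1 - y) *\<^sub>R (h, 0) + y *\<^sub>R (e, 1) = ((1-y)*h + y*e, y)" by simp
  have eq: "(1-y)*c + y*b = (1-y)*h + y*e"
    using assms by (simp add: y_def field_simps)
  have "((1-y)*c + y*b, y) \<in> hull4 a b c d"
    using mem_hull2[of "(c,0)" _ "(b,1)" y] y e1 by simp
  moreover have "((1-y)*c + y*b, y) \<in> hull4 e f g h"
    using mem_hull2[of "(h,0)" _ "(e,1)" y] y e2 eq by simp
  ultimately show ?thesis by blast
qed

lemma trap_meet:
  fixes a1 b1 c1 d1 a2 b2 c2 d2 :: real
  assumes "a1 \<le> b1" "c1 \<le> d1" "a2 \<le> b2" "c2 \<le> d2"
    "\<not> (b1 < a2 \<and> d1 < c2)" "\<not> (b2 < a1 \<and> d2 < c1)"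
  shows "hull4 a1 b1 c1 d1 \<inter> hull4 a2 b2 c2 d2 \<noteq> {}"
proof -
  consider "a2 \<le> b1 \<and> a1 \<le> b2" | "c2 \<le> d1 \<and> c1 \<le> d2" | "b1 < a2 \<and> d2 < c1" | "b2 < a1 \<and> d1 < c2"
    using assms by linarith
  then show ?thesis
  proof cases
    case 1
    have "(max a1 a2, 1) \<in> hull4 a1 b1 c1 d1"
      using 1 assms by (intro mem_hull_line[of a1 1 _ b1]) auto
    moreover have "(max a1 a2, 1) \<in> hull4 a2 b2 c2 d2"
      using 1 assms by (intro mem_hull_line[of a2 1 _ b2]) auto
    ultimately show ?thesis by blast
  next
    case 2
    have "(max c1 c2, 0) \<in> hull4 a1 b1 c1 d1"
      using 2 assms by (intro mem_hull_line[of c1 0 _ d1]) auto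
    moreover have "(max c1 c2, 0) \<in> hull4 a2 b2 c2 d2"
      using 2 assms by (intro mem_hull_line[of c2 0 _ d2]) auto
    ultimately show ?thesis by blast
  next
    case 3 then show ?thesis using trap_cross by blast
  next
    case 4 then show ?thesis
      using trap_cross[where a=a2 and b=b2 and c=c2 and d=d2 and e=a1 and f=b1 and g=c1 and h=d1]
      by (simp add: Int_commute)
  qed
qed



definition adjS :: "nat \<Rightarrow> nat \<Rightarrow> nat \<Rightarrow> nat \<Rightarrow> bool" where
 "adjS i0 j0 u v \<longleftrightarrow> u = v+1 \<or> v = u+1 \<or> (v = u+2 \<and> u mod 5 = 2) \<or> (u = v+2 \<and> v mod 5 = 2)
    \<or> (u = 5*j0+3 \<and> v = 5*i0+4) \<or> (v = 5*j0+3 \<and> u = 5*i0+4)"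

definition cc :: "nat \<Rightarrow> nat \<Rightarrow> nat \<Rightarrow> nat" where
 "cc i0 j0 p = (if p < 4*(j0-i0) then 5*i0+4 + 5*(p div 4) + p mod 4 else 5*j0+3)"

lemma mod5: "(5*a + c) mod 5 = c mod (5::nat)" by simp

lemma L1:
  assumes "u = 5*a+4+r" "r < 4" "s \<in> {1,2,3}" "v = (if r+s<4 then u+s else u+s+1)" "v \<le> 5*j0+2"
  shows "u \<noteq> v \<and> (adjS i0 j0 u v \<longleftrightarrow> s = 1)"
proof -
  have r: "r = 0 \<or> r = 1 \<or> r = 2 \<or> r = 3" using assms(2) by auto
  have s: "s = 1 \<or> s = 2 \<or> s = 3" using assms(3) by auto
  show ?thesis using r s assms(1,4,5) by (auto simp: adjS_def mod5)
qed

lemma L2: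
  assumes "u + s = 5*j0+3" "v = 5*j0+3" "s \<in> {1,2,3}" "i0 < j0"
  shows "u \<noteq> v \<and> (adjS i0 j0 u v \<longleftrightarrow> s = 1)"
proof -
  have s: "s = 1 \<or> s = 2 \<or> s = 3" using assms(3) by auto
  have n1: "5*j0+1 \<noteq> 5*i0+4" "5*j0 \<noteq> 5*i0+4" by presburger+
  show ?thesis using s assms n1 by (auto simp: adjS_def mod5)
qed

lemma L3:
  assumes "u = 5*j0 - 1 + r" "v = 5*i0+4+(r+s-5)" "r < 4" "5 \<le> r+s" "s \<le> 3" "i0 < j0"
  shows "u \<noteq> v \<and> \<not> adjS i0 j0 u v \<and> s \<noteq> 1"
proof -
  have c: "(r = 2 \<and> s = 3) \<or> (r = 3 \<and> s = 2) \<or> (r = 3 \<and> s = 3)" using assms(3,4,5) by auto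
  obtain e where e: "j0 = i0 + 1 + e" using assms(6) by (metis less_imp_Suc_add add_Suc_right add_Suc plus_1_eq_Suc add.commute)
  show ?thesis using c assms(1,2) by (auto simp: adjS_def mod5 e)
qed

lemma L4:
  assumes "u = 5*j0+3" "v = 5*i0+4+(s-1)" "s \<in> {1,2,3}" "i0 < j0"
  shows "u \<noteq> v \<and> (adjS i0 j0 u v \<longleftrightarrow> s = 1)"
proof -
  have s: "s = 1 \<or> s = 2 \<or> s = 3" using assms(3) by auto
  obtain e where e: "j0 = i0 + 1 + e" using assms(4) by (metis less_imp_Suc_add add_Suc_right add_Suc plus_1_eq_Suc add.commute)
  show ?thesis using s assms(1,2) by (auto simp: adjS_def mod5 e)
qed

lemma dm4: "(x::nat) < 4 \<Longrightarrow> (4*k + x) div 4 = k \<and> (4*k+x) mod 4 = x" by simp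

lemma cc_range:
  assumes "i0 < j0" "p < 4*(j0-i0)+1"
  shows "5*i0+4 \<le> cc i0 j0 p \<and> cc i0 j0 p \<le> 5*j0+3"
proof (cases "p < 4*(j0-i0)")
  case True
  have "p div 4 < j0 - i0" using True by auto
  moreover have "p mod 4 < 4" by auto
  ultimately show ?thesis using True assms by (auto simp: cc_def)
next
  case False then show ?thesis using assms by (auto simp: cc_def)
qed

lemma walk_prop:
  assumes "i0 < j0" "p < 4*(j0-i0)+1" "s \<in> {1,2,3}"
  shows "cc i0 j0 p \<noteq> cc i0 j0 ((p+s) mod (4*(j0-i0)+1)) \<and>
         (adjS i0 j0 (cc i0 j0 p) (cc i0 j0 ((p+s) mod (4*(j0-i0)+1))) \<longleftrightarrow> s = 1)"
proof -
  define d where "d = j0 - i0"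
  define M where "M = 4*d+1"
  have d1: "1 \<le> d" using assms(1) by (simp add: d_def)
  have s13: "1 \<le> s" "s \<le> 3" using assms(3) by auto
  have jd: "j0 = i0 + d" using assms(1) by (simp add: d_def)
  have MM: "4*(j0-i0)+1 = M" by (simp add: M_def d_def)
  show ?thesis
  proof (cases "p < 4*d")
    case False
    then have p: "p = 4*d" using assms(2) by (simp add: d_def)
    have u: "cc i0 j0 p = 5*j0+3" using p by (simp add: cc_def d_def)
    have "(p+s) mod M = s - 1"
    proof -
      have "p + s = (s-1) + M" using p s13 by (simp add: M_def)
      moreover have "s - 1 < M" using s13 d1 by (simp add: M_def)
      ultimately show ?thesis by simp
    qed
    moreover have "cc i0 j0 (s-1) = 5*i0+4+(s-1)"
    proof -
      have "s - 1 < 4*d" using s13 d1 by linarith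
      then show ?thesis using s13 by (simp add: cc_def d_def[symmetric])
    qed
    ultimately show ?thesis unfolding MM using L4[OF u _ assms(3,1)] by simp
  next
    case True
    define q where "q = p div 4"
    define r where "r = p mod 4"
    have pqr: "p = 4*q+r" and r4: "r < 4" by (simp_all add: q_def r_def)
    have qd: "q < d" using True pqr by auto
    have u: "cc i0 j0 p = 5*(i0+q)+4+r" using True by (simp add: cc_def d_def q_def r_def)
    consider "p + s < 4*d" | "p + s = 4*d" | "4*d < p + s" by linarith
    then show ?thesis
    proof cases
      case 1
      have m: "(p+s) mod M = p+s" using 1 by (simp add: M_def)
      have v: "cc i0 j0 (p+s) = 5*i0+4+5*((p+s) div 4) + (p+s) mod 4"
        using 1 by (simp add: cc_def d_def)
      have "(p+s) div 4 < d" using 1 by auto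
      moreover have "(p+s) mod 4 < 4" by simp
      ultimately have vb: "cc i0 j0 (p+s) \<le> 5*j0+2" using v jd by linarith
      have vv: "cc i0 j0 (p+s) = (if r+s<4 then cc i0 j0 p + s else cc i0 j0 p + s + 1)"
      proof (cases "r+s<4")
        case True
        have ps: "p + s = 4*q + (r+s)" using pqr by simp
        have "(p+s) div 4 = q" "(p+s) mod 4 = r+s" unfolding ps using True by simp_all
        then show ?thesis using True v u by simp
      next
        case False
        have ps: "p + s = 4*(q+1) + (r+s-4)" using False pqr by simp
        have x: "r+s-4 < 4" using r4 s13 by simp
        have "(p+s) div 4 = q+1" "(p+s) mod 4 = r+s-4" unfolding ps using dm4[OF x, of "q+1"] by blast+
        then show ?thesis using False v u by simp
      qed
      show ?thesis unfolding MM m using L1[OF u r4 assms(3) vv vb] by simp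
    next
      case 2
      have m: "(p+s) mod M = 4*d" using 2 by (simp add: M_def)
      have v: "cc i0 j0 (4*d) = 5*j0+3" by (simp add: cc_def d_def)
      have a1: "q + 1 \<le> d" using qd by simp
      have a2: "\<not> q + 2 \<le> d" using 2 pqr r4 s13 by linarith
      have "d = q + 1 \<and> r + s = 4" using a1 a2 2 pqr by linarith
      then have "cc i0 j0 p + s = 5*j0+3" using u jd by simp
      then show ?thesis unfolding MM m using L2[OF _ v assms(3,1)] by simp
    next
      case 3
      have a1: "q + 1 \<le> d" using qd by simp
      have a2: "\<not> q + 2 \<le> d" using 3 pqr r4 s13 by linarith
      have qq: "q = d - 1" using a1 a2 by linarith
      have m: "(p+s) mod M = r+s-5"
      proof -
        have "p + s = (r+s-5) + M" using 3 pqr qq d1 r4 s13 by (simp add: M_def)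
        moreover have "r+s-5 < M" using r4 s13 d1 by (simp add: M_def)
        ultimately show ?thesis by simp
      qed
      have v: "cc i0 j0 (r+s-5) = 5*i0+4+(r+s-5)"
      proof -
        have "r+s-5 < 4*d" "r+s-5 < 4" using r4 s13 d1 by linarith+
        then show ?thesis by (simp add: cc_def d_def[symmetric])
      qed
      have uu: "cc i0 j0 p = 5*j0 - 1 + r" using u qq jd d1 by simp
      have "5 \<le> r+s" using 3 pqr qq d1 by simp
      then show ?thesis unfolding MM m using L3[OF uu v r4 _ s13(2) assms(1)] by simp
    qed
  qed
qed

lemma walk_aux:
  fixes R :: "'a \<Rightarrow> 'a \<Rightarrow> bool" and w :: "nat \<Rightarrow> 'a"
  assumes tr: "\<And>a b c. R (w a) (w b) \<Longrightarrow> R (w b) (w c) \<Longrightarrow> R (w a) (w c)"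
    and irr: "\<And>a. \<not> R (w a) (w a)"
    and adj: "\<And>l. \<not> R (w l) (w (Suc l)) \<and> \<not> R (w (Suc l)) (w l)"
    and c2: "\<And>l. R (w l) (w (l+2)) \<or> R (w (l+2)) (w l)"
    and c3: "\<And>l. R (w l) (w (l+3)) \<or> R (w (l+3)) (w l)"
    and per: "w (2*m) = w 0" "0 < m"
    and st: "R (w 0) (w 2)"
  shows False
proof -
  have step: "R (w (Suc l)) (w (Suc l+2))" if h: "R (w l) (w (l+2))" for l
  proof -
    have a: "R (w l) (w (l+3))"
    proof (rule ccontr)
      assume "\<not> R (w l) (w (l+3))"
      then have "R (w (l+3)) (w l)" using c3[of l] by blast
      then have "R (w (l+3)) (w (l+2))" using tr h by blast
      moreover have "l+3 = Suc (l+2)" by simp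
      ultimately show False using adj[of "l+2"] by metis
    qed
    show ?thesis
    proof (rule ccontr)
      assume "\<not> R (w (Suc l)) (w (Suc l+2))"
      moreover have "Suc l + 2 = l+3" by simp
      ultimately have "R (w (l+3)) (w (Suc l))" using c2[of "Suc l"] by metis
      then have "R (w l) (w (Suc l))" using tr a by blast
      then show False using adj[of l] by blast
    qed
  qed
  have all: "R (w l) (w (l+2))" for l
  proof (induction l)
    case 0 then show ?case using st by (simp add: numeral_2_eq_2)
  next
    case (Suc l) then show ?case using step by blast
  qed
  have chain: "R (w 0) (w (2 * Suc t))" for t
  proof (induction t)
    case 0 then show ?case using st by simp
  next
    case (Suc t)
    have "R (w (2 * Suc t)) (w (2 * Suc t + 2))" by (rule all)
    moreover have "2 * Suc t + 2 = 2 * Suc (Suc t)" by simp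
    ultimately show ?case using tr Suc.IH by metis
  qed
  obtain t where "m = Suc t" using per(2) by (cases m) auto
  then show False using chain[of t] per(1) irr by metis
qed

lemma walk_contra:
  fixes R :: "'a \<Rightarrow> 'a \<Rightarrow> bool" and w :: "nat \<Rightarrow> 'a"
  assumes tr: "\<And>a b c. R (w a) (w b) \<Longrightarrow> R (w b) (w c) \<Longrightarrow> R (w a) (w c)"
    and irr: "\<And>a. \<not> R (w a) (w a)"
    and adj: "\<And>l. \<not> R (w l) (w (Suc l)) \<and> \<not> R (w (Suc l)) (w l)"
    and c2: "\<And>l. R (w l) (w (l+2)) \<or> R (w (l+2)) (w l)"
    and c3: "\<And>l. R (w l) (w (l+3)) \<or> R (w (l+3)) (w l)"
    and per: "w (2*m) = w 0" "0 < m"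
  shows False
proof (cases "R (w 0) (w 2)")
  case True
  show False by (rule walk_aux[of R w, OF tr irr adj c2 c3 per True]) blast+
next
  case False
  then have "R (w 2) (w 0)" using c2[of 0] by (simp add: numeral_2_eq_2)
  show False
    by (rule walk_aux[of "\<lambda>x y. R y x" w]) (use tr irr adj c2 c3 per \<open>R (w 2) (w 0)\<close> in blast)+
qed


lemma adjP_sym: "adjP n i0 j0 u v = adjP n j0 i0 u v"
  unfolding adjP_def by blast

lemma chord_mod:
  fixes u v n :: nat
  assumes "u < 5*n" "v < 5*n"
  shows "(\<exists>k<n. (u = 5*k+2 \<and> v = 5*k+4) \<or> (v = 5*k+2 \<and> u = 5*k+4)) \<longleftrightarrow>
         (v = u+2 \<and> u mod 5 = 2) \<or> (u = v+2 \<and> v mod 5 = 2)"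
proof
  assume "\<exists>k<n. (u = 5*k+2 \<and> v = 5*k+4) \<or> (v = 5*k+2 \<and> u = 5*k+4)"
  then obtain k where k: "(u = 5*k+2 \<and> v = 5*k+4) \<or> (v = 5*k+2 \<and> u = 5*k+4)" by blast
  have m: "(5*k+2) mod 5 = (2::nat)" by (simp only: mod5) simp
  show "(v = u+2 \<and> u mod 5 = 2) \<or> (u = v+2 \<and> v mod 5 = 2)"
  proof (cases "u = 5*k+2 \<and> v = 5*k+4")
    case True
    then have "v = u + 2" by simp
    moreover have "u mod 5 = 2" using True m by (simp only:)
    ultimately show ?thesis by blast
  next
    case False
    then have F: "v = 5*k+2 \<and> u = 5*k+4" using k by blast
    then have "u = v + 2" by simp
    moreover have "v mod 5 = 2" using F m by (simp only:)
    ultimately show ?thesis by blast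
  qed
next
  assume h: "(v = u+2 \<and> u mod 5 = 2) \<or> (u = v+2 \<and> v mod 5 = 2)"
  show "\<exists>k<n. (u = 5*k+2 \<and> v = 5*k+4) \<or> (v = 5*k+2 \<and> u = 5*k+4)"
  proof (cases "v = u+2 \<and> u mod 5 = 2")
    case True
    have "u = 5*(u div 5) + 2" using True by (metis div_mult_mod_eq mult.commute)
    moreover have "u div 5 < n" using assms(1) by auto
    ultimately show ?thesis using True by (intro exI[of _ "u div 5"]) auto
  next
    case False
    then have F: "u = v+2 \<and> v mod 5 = 2" using h by blast
    have "v = 5*(v div 5) + 2" using F by (metis div_mult_mod_eq mult.commute)
    moreover have "v div 5 < n" using assms(2) by auto
    ultimately show ?thesis using F by (intro exI[of _ "v div 5"]) auto
  qed
qed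

lemma adj_range:
  assumes "i0 < j0" "j0 < n" "5*i0+4 \<le> u" "u \<le> 5*j0+3" "5*i0+4 \<le> v" "v \<le> 5*j0+3"
  shows "adjP n i0 j0 u v \<longleftrightarrow> adjS i0 j0 u v"
proof -
  have un: "u < 5*n" "v < 5*n" using assms by linarith+
  show ?thesis
    unfolding adjP_def adjS_def chord_mod[OF un]
    using assms by auto
qed

lemma trap_graph_contra:
  assumes "i0 < j0" "j0 < n"
    and E: "\<And>u v. {u,v} \<in> E \<longleftrightarrow> adjP n i0 j0 u v"
  shows "\<not> is_trapezoid_graph {1..5*n} E"
proof
  assume "is_trapezoid_graph {1..5*n} E"
  then obtain T :: "nat \<Rightarrow> (real \<times> real) set" where
    Tt: "\<forall>v\<in>{1..5*n}. is_trapezoid (T v)" and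
    TE: "\<forall>u\<in>{1..5*n}. \<forall>v\<in>{1..5*n}. u \<noteq> v \<longrightarrow> ({u, v} \<in> E \<longleftrightarrow> T u \<inter> T v \<noteq> {})"
    unfolding is_trapezoid_graph_def by blast
  have "\<forall>v\<in>{1..5*n}. \<exists>q. fst q \<le> fst (snd q) \<and> fst (snd (snd q)) \<le> snd (snd (snd q)) \<and>
      T v = hull4 (fst q) (fst (snd q)) (fst (snd (snd q))) (snd (snd (snd q)))"
  proof
    fix v assume "v \<in> {1..5*n}"
    then obtain a b c d where "a \<le> b" "c \<le> d" "T v = hull4 a b c d"
      using Tt unfolding is_trapezoid_def by blast
    then show "\<exists>q. fst q \<le> fst (snd q) \<and> fst (snd (snd q)) \<le> snd (snd (snd q)) \<and>
      T v = hull4 (fst q) (fst (snd q)) (fst (snd (snd q))) (snd (snd (snd q)))"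
      by (intro exI[of _ "(a,b,c,d)"]) simp
  qed
  then obtain f where f: "\<forall>v\<in>{1..5*n}. fst (f v) \<le> fst (snd (f v)) \<and> fst (snd (snd (f v))) \<le> snd (snd (snd (f v))) \<and>
      T v = hull4 (fst (f v)) (fst (snd (f v))) (fst (snd (snd (f v)))) (snd (snd (snd (f v))))"
    by metis
  define A where "A v = fst (f v)" for v
  define B where "B v = fst (snd (f v))" for v
  define C where "C v = fst (snd (snd (f v)))" for v
  define D where "D v = snd (snd (snd (f v)))" for v
  have ABCD: "A v \<le> B v" "C v \<le> D v" "T v = hull4 (A v) (B v) (C v) (D v)" if "v \<in> {1..5*n}" for v
    using f that unfolding A_def B_def C_def D_def by auto
  define R where "R x y \<longleftrightarrow> B x < A y \<and> D x < C y" for x y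
  define M where "M = 4*(j0-i0)+1"
  define w where "w l = cc i0 j0 (l mod M)" for l
  have M0: "0 < M" by (simp add: M_def)
  have wr: "5*i0+4 \<le> w l \<and> w l \<le> 5*j0+3" for l
    using cc_range[OF assms(1), of "l mod M"] M0 unfolding w_def M_def by simp
  have wV: "w l \<in> {1..5*n}" for l
    using wr[of l] assms(2) by auto
  have wp: "w l \<noteq> w (l+s) \<and> (adjS i0 j0 (w l) (w (l+s)) \<longleftrightarrow> s = 1)" if "s \<in> {1,2,3}" for l s
  proof -
    have "w (l+s) = cc i0 j0 ((l mod M + s) mod M)" unfolding w_def by (simp add: mod_add_left_eq)
    moreover have "l mod M < 4*(j0-i0)+1" using M0 unfolding M_def by simp
    ultimately show ?thesis using walk_prop[OF assms(1) _ that, of "l mod M"]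
      unfolding w_def M_def by simp
  qed
  have wE: "{w l, w (l+s)} \<in> E \<longleftrightarrow> s = 1" if "s \<in> {1,2,3}" for l s
    using wp[OF that, of l] adj_range[OF assms(1,2)] wr[of l] wr[of "l+s"] E by metis
  have geoA: "\<not> R x y \<and> \<not> R y x" if "x \<in> {1..5*n}" "y \<in> {1..5*n}" "x \<noteq> y" "{x,y} \<in> E" for x y
  proof -
    have ne: "T x \<inter> T y \<noteq> {}" using TE that by blast
    show ?thesis
    proof (intro conjI notI)
      assume "R x y"
      then have "T x \<inter> T y = {}" unfolding ABCD(3)[OF that(1)] ABCD(3)[OF that(2)]
        using trap_left_disj ABCD(1,2) that(1,2) unfolding R_def by blast
      then show False using ne by blast
    next
      assume "R y x"
      then have "T y \<inter> T x = {}" unfolding ABCD(3)[OF that(1)] ABCD(3)[OF that(2)]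
        using trap_left_disj ABCD(1,2) that(1,2) unfolding R_def by blast
      then show False using ne by blast
    qed
  qed
  have geoB: "R x y \<or> R y x" if "x \<in> {1..5*n}" "y \<in> {1..5*n}" "x \<noteq> y" "{x,y} \<notin> E" for x y
  proof (rule ccontr)
    assume "\<not> (R x y \<or> R y x)"
    then have "T x \<inter> T y \<noteq> {}" unfolding ABCD(3)[OF that(1)] ABCD(3)[OF that(2)]
      using trap_meet ABCD(1,2) that(1,2) unfolding R_def by blast
    then show False using TE that by blast
  qed
  show False
  proof (rule walk_contra[of R w])
    fix a b c
    assume "R (w a) (w b)" "R (w b) (w c)"
    then show "R (w a) (w c)" using ABCD(1,2)[OF wV[of b]] unfolding R_def by linarith
  next
    fix a show "\<not> R (w a) (w a)" using ABCD(1,2)[OF wV[of a]] unfolding R_def by linarith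
  next
    fix l
    have "w l \<noteq> w (l+1)" "{w l, w (l+1)} \<in> E" using wp[of 1 l] wE[of 1 l] by auto
    then show "\<not> R (w l) (w (Suc l)) \<and> \<not> R (w (Suc l)) (w l)" using geoA wV by simp
  next
    fix l
    have "w l \<noteq> w (l+2)" "{w l, w (l+2)} \<notin> E" using wp[of 2 l] wE[of 2 l] by auto
    then show "R (w l) (w (l+2)) \<or> R (w (l+2)) (w l)" using geoB wV by blast
  next
    fix l
    have "w l \<noteq> w (l+3)" "{w l, w (l+3)} \<notin> E" using wp[of 3 l] wE[of 3 l] by auto
    then show "R (w l) (w (l+3)) \<or> R (w (l+3)) (w l)" using geoB wV by blast
  next
    show "w (2*M) = w 0" unfolding w_def by simp
  next
    show "0 < M" by (rule M0)
  qed
qed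

theorem mainTheorem12:
  fixes n i j :: nat
  assumes "n \<ge> 2" and "i \<in> {1..n}" and "j \<in> {1..n}" and "i \<noteq> j"
  shows "\<not> is_trapezoid_graph (Q_vertices n) (crossing (Q_edges n) (H_edges j) (sigma i j))"
proof -
  have i1: "1 \<le> i" "i \<le> n" and j1: "1 \<le> j" "j \<le> n" using assms by auto
  have E: "{u,v} \<in> crossing (Q_edges n) (H_edges j) (sigma i j) \<longleftrightarrow> adjP n (i-1) (j-1) u v" for u v
    by (rule adj_iff[OF i1(1) j1(1)])
  show ?thesis
  proof (cases "i < j")
    case True
    have a: "i-1 < j-1" "j-1 < n" using True i1 j1 by linarith+
    show ?thesis unfolding Q_vertices_def by (rule trap_graph_contra[OF a E])
  next
    case False
    then have "j < i" using assms(4) by simp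
    have a: "j-1 < i-1" "i-1 < n" using \<open>j < i\<close> i1 j1 by linarith+
    have E': "{u,v} \<in> crossing (Q_edges n) (H_edges j) (sigma i j) \<longleftrightarrow> adjP n (j-1) (i-1) u v" for u v
      using E[of u v] adjP_sym[of n "i-1" "j-1" u v] by simp
    show ?thesis unfolding Q_vertices_def by (rule trap_graph_contra[OF a E'])
  qed
qed

end
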